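(* Let $A$ be a real symmetric $n\times n$ matrix and suppose there exist $\alpha\in\mathbb{R}$ with $A+\alpha I\neq 0$ and an integer $k$ with $1\le k<n/2$ such that $$\mathbb{1}^\top A\mathbb{1}\ge\sqrt{(n-k)^2+k^2}\,\|A+\alpha I\|_F-n\alpha.$$ Then the largest (rightmost) eigenvalue of $A$ is simple, and a corresponding eigenvector can be chosen (up to sign) so that it has at least $n-k+1$ nonnegative entries.
   Context: $\mathbb{1}\in\mathbb{R}^n$ is the all-ones vector, $I$ the identity matrix, and $\|\cdot\|_F$ the Frobenius norm. *)

theory Defs
  imports "Jordan_Normal_Form.Char_Poly"
begin

definition frobenius_norm :: "real mat \<Rightarrow> real" where
  "frobenius_norm M = sqrt (\<Sum>i<dim_row M. \<Sum>j<dim_col M. (M $$ (i, j))\<^sup>2)"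

definition ones_form :: "real mat \<Rightarrow> real" where
  "ones_form M = (\<Sum>i<dim_row M. \<Sum>j<dim_col M. M $$ (i, j))"

end

theory Submission
  imports Defs "Jordan_Normal_Form.Spectral_Radius"
begin


lemma sym_real_eigenvalue:
  fixes B :: "real mat"
  assumes B: "B \<in> carrier_mat n n" and sym: "transpose_mat B = B" and n: "n > 0"
  shows "\<exists>l. eigenvalue B l"
proof -
  define Bc where "Bc = map_mat complex_of_real B"
  have Bc: "Bc \<in> carrier_mat n n" using B unfolding Bc_def by auto
  from spectrum_non_empty[OF Bc n] obtain z where "eigenvalue Bc z" unfolding spectrum_def by auto
  then obtain w where ev: "eigenvector Bc w z" unfolding eigenvalue_def by auto
  hence w: "w \<in> carrier_vec n" and w0: "w \<noteq> 0\<^sub>v n" and eq: "Bc *\<^sub>v w = z \<cdot>\<^sub>v w"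
    using Bc unfolding eigenvector_def by auto
  have symB: "\<And>i j. i < n \<Longrightarrow> j < n \<Longrightarrow> B $$ (i,j) = B $$ (j,i)"
    using sym B by (metis carrier_matD index_transpose_mat(1))
  define s where "s = (\<Sum>i<n. cnj (w$i) * (\<Sum>j<n. of_real (B $$ (i,j)) * w$j))"
  have comp: "\<And>i. i < n \<Longrightarrow> (Bc *\<^sub>v w) $ i = (\<Sum>j<n. of_real (B $$ (i,j)) * w$j)"
    using w B unfolding Bc_def by (auto simp: mult_mat_vec_def scalar_prod_def atLeast0LessThan)
  have "s = (\<Sum>i<n. cnj (w$i) * (z * w $ i))"
    unfolding s_def using w by (intro sum.cong, auto simp: comp[symmetric] eq)
  also have "\<dots> = z * (\<Sum>i<n. of_real ((cmod (w$i))\<^sup>2))"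
    unfolding sum_distrib_left by (intro sum.cong refl) (insert complex_norm_square, simp add: mult.commute mult.left_commute)
  finally have s1: "s = z * of_real (\<Sum>i<n. (cmod (w$i))\<^sup>2)" by simp
  have "cnj s = (\<Sum>i<n. w$i * (\<Sum>j<n. of_real (B $$ (i,j)) * cnj (w$j)))"
    unfolding s_def by (simp add: sum_distrib_left)
  also have "\<dots> = (\<Sum>i<n. \<Sum>j<n. w$i * of_real (B $$ (i,j)) * cnj (w$j))"
    by (simp add: sum_distrib_left mult.assoc)
  also have "\<dots> = (\<Sum>j<n. \<Sum>i<n. w$i * of_real (B $$ (i,j)) * cnj (w$j))"
    by (rule sum.swap)
  also have "\<dots> = (\<Sum>j<n. cnj (w$j) * (\<Sum>i<n. of_real (B $$ (j,i)) * w$i))"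
    by (rule sum.cong, simp, simp add: sum_distrib_left symB mult.commute mult.left_commute)
  also have "\<dots> = s" unfolding s_def ..
  finally have "cnj s = s" .
  hence ims: "Im s = 0"
  proof - assume "cnj s = s" hence "Im (cnj s) = Im s" by simp thus ?thesis by simp qed
  have "\<exists>i<n. w $ i \<noteq> 0" using w w0 by (metis eq_vecI carrier_vecD index_zero_vec(1) index_zero_vec(2))
  then obtain i where i: "i < n" "w $ i \<noteq> 0" by auto
  have pos: "(\<Sum>i<n. (cmod (w$i))\<^sup>2) > 0"
    by (rule sum_pos2[of _ i], insert i, auto)
  from ims s1 pos have imz: "Im z = 0" by simp
  hence zr: "z = of_real (Re z)" by (simp add: complex_eq_iff)
  have "poly (char_poly Bc) z = 0" using \<open>eigenvalue Bc z\<close> eigenvalue_root_char_poly[OF Bc] by simp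
  also have "char_poly Bc = map_poly of_real (char_poly B)" unfolding Bc_def
    by (rule of_real_hom.char_poly_hom[OF B])
  finally have "poly (map_poly of_real (char_poly B)) (of_real (Re z)) = (0::complex)" using zr by metis
  hence "poly (char_poly B) (Re z) = 0" by simp
  thus ?thesis using eigenvalue_root_char_poly[OF B] by blast
qed



lemma householder:
  fixes v :: "real vec"
  assumes v: "v \<in> carrier_vec n" and vv: "(\<Sum>i<n. (v$i)\<^sup>2) = 1" and n: "n > 0"
  shows "\<exists>H. H \<in> carrier_mat n n \<and> transpose_mat H = H \<and> H * H = 1\<^sub>m n \<and> (\<forall>i<n. H $$ (i,0) = v $ i)"
proof (cases "\<forall>i<n. v $ i = (if i = 0 then 1 else 0)")
  case True
  thus ?thesis by (intro exI[of _ "1\<^sub>m n"], auto)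
next
  case False
  define w where "w = (\<lambda>i. v $ i - (if i = 0 then 1 else (0::real)))"
  define S where "S = (\<Sum>k<n. (w k)\<^sup>2)"
  from False obtain i0 where i0: "i0 < n" "w i0 \<noteq> 0" unfolding w_def by auto
  have Spos: "S > 0" unfolding S_def by (rule sum_pos2[of _ i0], insert i0, auto)
  have "S = (\<Sum>k<n. (v$k)\<^sup>2) - 2 * v $ 0 + 1"
  proof -
    have "S = (\<Sum>k<n. (v$k)\<^sup>2) - (\<Sum>k<n. if k = 0 then 2 * v $ k else 0) + (\<Sum>k<n. if k = 0 then 1 else 0)"
      unfolding S_def w_def sum_subtractf[symmetric] sum.distrib[symmetric]
      by (rule sum.cong, auto simp: power2_eq_square algebra_simps)
    also have "\<dots> = (\<Sum>k<n. (v$k)\<^sup>2) - 2 * v $ 0 + 1"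
      using n by (simp add: sum.delta)
    finally show ?thesis .
  qed
  hence S: "S = 2 - 2 * v $ 0" using vv by simp
  define c where "c = 2 / S"
  have cw0: "c * w 0 = -1" unfolding c_def w_def using S Spos by (simp add: field_simps)
  have cS: "c * c * S = 2 * c" unfolding c_def using Spos by (simp add: field_simps power2_eq_square)
  define H where "H = mat n n (\<lambda>(i,j). (if i = j then 1 else 0) - c * w i * w j)"
  have H: "H \<in> carrier_mat n n" unfolding H_def by auto
  have Ht: "transpose_mat H = H" unfolding H_def by (rule eq_matI, auto)
  have HH: "H * H = 1\<^sub>m n"
  proof (rule eq_matI)
    fix i j assume i: "i < dim_row (1\<^sub>m n)" and j: "j < dim_col (1\<^sub>m n)"
    hence i: "i < n" and j: "j < n" by auto
    have "(H * H) $$ (i,j) = (\<Sum>k<n. ((if i = k then 1 else 0) - c * w i * w k) * ((if k = j then 1 else 0) - c * w k * w j))"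
      using i j H unfolding H_def by (auto simp: scalar_prod_def atLeast0LessThan intro!: sum.cong)
    also have "\<dots> = (\<Sum>k<n. if i = k then (if k = j then 1 else 0) - c * w k * w j else 0)
        - (\<Sum>k<n. if k = j then c * w i * w k else 0) + (\<Sum>k<n. c * c * w i * w j * (w k)\<^sup>2)"
      unfolding sum_subtractf[symmetric] sum.distrib[symmetric]
      by (rule sum.cong, auto simp: algebra_simps power2_eq_square)
    also have "\<dots> = (if i = j then 1 else 0) - c * w i * w j - c * w i * w j + c * c * w i * w j * S"
      using i j unfolding S_def by (simp add: sum.delta sum.delta' sum_distrib_left[symmetric])
    also have "\<dots> = (if i = j then 1 else 0)" using cS by (auto simp: algebra_simps)
    finally show "(H * H) $$ (i,j) = 1\<^sub>m n $$ (i,j)" using i j by simp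
  qed (insert H, auto)
  have col: "\<forall>i<n. H $$ (i,0) = v $ i"
  proof (intro allI impI)
    fix i assume i: "i < n"
    have "H $$ (i,0) = (if i = 0 then 1 else 0) - w i * (c * w 0)" unfolding H_def using i n by simp
    also have "\<dots> = v $ i" using cw0 unfolding w_def by simp
    finally show "H $$ (i,0) = v $ i" .
  qed
  show ?thesis using H Ht HH col by blast
qed



definition dmat :: "nat \<Rightarrow> (nat \<Rightarrow> real) \<Rightarrow> real mat" where
  "dmat n f = mat n n (\<lambda>(i,j). if i = j then f i else 0)"

lemma dmat_carrier[simp]: "dmat n f \<in> carrier_mat n n" unfolding dmat_def by auto
lemma dmat_dims[simp]: "dim_row (dmat n f) = n" "dim_col (dmat n f) = n" unfolding dmat_def by auto

lemma unit_mult: assumes H: "(H :: real mat) \<in> carrier_mat n n" and n: "0 < n"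
  shows "H *\<^sub>v unit_vec n 0 = vec n (\<lambda>i. H $$ (i,0))"
  by (rule eq_vecI, insert H n, auto)

lemma spectral:
  fixes B :: "real mat"
  assumes "B \<in> carrier_mat n n" and "transpose_mat B = B"
  shows "\<exists>V f. V \<in> carrier_mat n n \<and> transpose_mat V * V = 1\<^sub>m n \<and> B = V * dmat n f * transpose_mat V"
  using assms
proof (induction n arbitrary: B)
  case 0
  thus ?case by (intro exI[of _ "1\<^sub>m 0"] exI[of _ "\<lambda>_. 0"], auto)
next
  case (Suc m B)
  let ?n = "Suc m"
  have B: "B \<in> carrier_mat ?n ?n" and symB: "transpose_mat B = B" using Suc by auto
  from sym_real_eigenvalue[OF B symB] obtain l where "eigenvalue B l" by auto
  then obtain u where "eigenvector B u l" unfolding eigenvalue_def by auto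
  hence u: "u \<in> carrier_vec ?n" and u0: "u \<noteq> 0\<^sub>v ?n" and Bu: "B *\<^sub>v u = l \<cdot>\<^sub>v u"
    using B unfolding eigenvector_def by auto
  define N where "N = (\<Sum>i<?n. (u$i)\<^sup>2)"
  have "\<exists>i<?n. u $ i \<noteq> 0" using u u0 by (metis eq_vecI carrier_vecD index_zero_vec(1) index_zero_vec(2))
  then obtain i0 where i0: "i0 < ?n" "u $ i0 \<noteq> 0" by auto
  have Npos: "N > 0" unfolding N_def by (rule sum_pos2[of _ i0], insert i0, auto)
  define v where "v = (1 / sqrt N) \<cdot>\<^sub>v u"
  have v: "v \<in> carrier_vec ?n" unfolding v_def using u by auto
  have vv: "(\<Sum>i<?n. (v$i)\<^sup>2) = 1"
  proof -
    have "(\<Sum>i<?n. (v$i)\<^sup>2) = (\<Sum>i<?n. (u$i)\<^sup>2 / N)"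
      unfolding v_def using u Npos by (intro sum.cong, auto simp: power_divide power2_eq_square)
    also have "\<dots> = 1" unfolding sum_divide_distrib[symmetric] N_def[symmetric] using Npos by simp
    finally show ?thesis .
  qed
  have Bv: "B *\<^sub>v v = l \<cdot>\<^sub>v v" unfolding v_def
    using mult_mat_vec[OF B u] Bu by (auto simp: smult_smult_assoc mult.commute)
  from householder[OF v vv] obtain H where H: "H \<in> carrier_mat ?n ?n" and Ht: "transpose_mat H = H"
    and HH: "H * H = 1\<^sub>m ?n" and Hcol: "\<forall>i<?n. H $$ (i,0) = v $ i" by auto
  define e :: "real vec" where "e = unit_vec ?n 0"
  have e: "e \<in> carrier_vec ?n" unfolding e_def by auto
  have He: "H *\<^sub>v e = v" unfolding e_def using unit_mult[OF H] Hcol v by (auto intro!: eq_vecI)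
  have Hv: "H *\<^sub>v v = e" using He HH H e by (metis assoc_mult_mat_vec one_mult_mat_vec)
  define M where "M = H * B * H"
  have M: "M \<in> carrier_mat ?n ?n" unfolding M_def using H B by auto
  have symM: "transpose_mat M = M"
  proof -
    have BH: "B * H \<in> carrier_mat ?n ?n" using B H by auto
    have "transpose_mat M = transpose_mat (H * (B * H))" unfolding M_def using H B by simp
    also have "\<dots> = transpose_mat (B * H) * transpose_mat H" by (rule transpose_mult[OF H BH])
    also have "transpose_mat (B * H) = transpose_mat H * transpose_mat B" by (rule transpose_mult[OF B H])
    finally show ?thesis unfolding Ht symB M_def by simp
  qed
  have Me: "M *\<^sub>v e = l \<cdot>\<^sub>v e"
  proof -
    have HB: "H * B \<in> carrier_mat ?n ?n" using H B by auto
    have "M *\<^sub>v e = (H * B) *\<^sub>v (H *\<^sub>v e)" unfolding M_def by (rule assoc_mult_mat_vec[OF HB H e])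
    also have "\<dots> = H *\<^sub>v (B *\<^sub>v (H *\<^sub>v e))" by (rule assoc_mult_mat_vec[OF H B], insert H e, auto)
    also have "\<dots> = l \<cdot>\<^sub>v e" unfolding He Bv mult_mat_vec[OF H v] Hv ..
    finally show ?thesis .
  qed
  have Mcol: "\<And>i. i < ?n \<Longrightarrow> M $$ (i,0) = (if i = 0 then l else 0)"
  proof -
    fix i assume i: "i < ?n"
    have "M $$ (i,0) = (M *\<^sub>v e) $ i" unfolding e_def using unit_mult[OF M] i by simp
    hence "M $$ (i,0) = (l \<cdot>\<^sub>v e) $ i" using Me by simp
    thus "M $$ (i,0) = (if i = 0 then l else 0)" unfolding e_def using i by simp
  qed
  have Mrow: "\<And>j. j < ?n \<Longrightarrow> M $$ (0,j) = (if j = 0 then l else 0)"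
    using Mcol symM M by (metis carrier_matD index_transpose_mat(1) zero_less_Suc)
  obtain M1 M2 M3 M4 where sb: "split_block M 1 1 = (M1,M2,M3,M4)" by (cases "split_block M 1 1", auto)
  have dims: "dim_row M = 1 + m" "dim_col M = 1 + m" using M by auto
  note spl = split_block[OF sb dims]
  have M4: "M4 \<in> carrier_mat m m" using spl by auto
  have M4e: "\<And>i j. i < m \<Longrightarrow> j < m \<Longrightarrow> M4 $$ (i,j) = M $$ (i+1, j+1)"
    using sb M unfolding split_block_def Let_def by auto
  have M1: "M1 = mat 1 1 (\<lambda>_. l)" using sb Mcol M unfolding split_block_def Let_def by (auto intro!: eq_matI)
  have M2: "M2 = 0\<^sub>m 1 m" using sb Mrow M unfolding split_block_def Let_def by (auto intro!: eq_matI)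
  have M3: "M3 = 0\<^sub>m m 1" using sb Mcol M unfolding split_block_def Let_def by (auto intro!: eq_matI)
  have symM4: "transpose_mat M4 = M4"
  proof (rule eq_matI)
    fix i j assume "i < dim_row M4" "j < dim_col M4"
    hence i: "i < m" and j: "j < m" using M4 by auto
    have "M $$ (j+1, i+1) = M $$ (i+1,j+1)" using symM M i j by (metis Suc_eq_plus1 Suc_less_eq carrier_matD index_transpose_mat(1))
    thus "transpose_mat M4 $$ (i, j) = M4 $$ (i, j)" using M4e i j M4 by auto
  qed (insert M4, auto)
  from Suc.IH[OF M4 symM4] obtain V' f' where V': "V' \<in> carrier_mat m m"
    and V'V': "transpose_mat V' * V' = 1\<^sub>m m" and M4d: "M4 = V' * dmat m f' * transpose_mat V'" by auto
  define V1 where "V1 = four_block_mat (1\<^sub>m 1) (0\<^sub>m 1 m) (0\<^sub>m m 1) V'"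
  define f where "f = (\<lambda>i. if i = 0 then l else f' (i - 1))"
  have V1: "V1 \<in> carrier_mat ?n ?n" unfolding V1_def using V' by auto
  have V1t: "transpose_mat V1 = four_block_mat (1\<^sub>m 1) (0\<^sub>m 1 m) (0\<^sub>m m 1) (transpose_mat V')"
    unfolding V1_def by (subst transpose_four_block_mat, insert V', auto)
  have D: "dmat ?n f = four_block_mat (mat 1 1 (\<lambda>_. l)) (0\<^sub>m 1 m) (0\<^sub>m m 1) (dmat m f')"
    unfolding dmat_def f_def by (rule eq_matI, auto)
  have V1V1: "transpose_mat V1 * V1 = 1\<^sub>m ?n"
    unfolding V1t unfolding V1_def
    by (subst mult_four_block_mat[of _ 1 1 _ m _ m _ _ 1 _ m], insert V' V'V', auto)
  have MV: "M = V1 * dmat ?n f * transpose_mat V1"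
  proof -
    have "V1 * dmat ?n f = four_block_mat (mat 1 1 (\<lambda>_. l)) (0\<^sub>m 1 m) (0\<^sub>m m 1) (V' * dmat m f')"
      unfolding V1_def D
      by (subst mult_four_block_mat[of _ 1 1 _ m _ m _ _ 1 _ m], insert V' dmat_carrier[of m f'], auto)
    also have "\<dots> * transpose_mat V1 = four_block_mat (mat 1 1 (\<lambda>_. l)) (0\<^sub>m 1 m) (0\<^sub>m m 1) (V' * dmat m f' * transpose_mat V')"
      unfolding V1t
      by (subst mult_four_block_mat[of _ 1 1 _ m _ m _ _ 1 _ m], insert V' dmat_carrier[of m f'], auto)
    also have "\<dots> = M" using spl M1 M2 M3 M4d by simp
    finally show ?thesis by simp
  qed
  define V where "V = H * V1"
  have V: "V \<in> carrier_mat ?n ?n" unfolding V_def using H V1 by auto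
  have Vt: "transpose_mat V = transpose_mat V1 * H" unfolding V_def using transpose_mult[OF H V1] Ht by simp
  have VV: "transpose_mat V * V = 1\<^sub>m ?n"
  proof -
    have "transpose_mat V * V = (transpose_mat V1 * H) * (H * V1)" using Vt V_def by simp
    also have "\<dots> = transpose_mat V1 * (H * H) * V1" using H V1
      by (simp add: assoc_mult_mat[of _ ?n ?n _ ?n _ ?n])
    also have "\<dots> = 1\<^sub>m ?n" using HH V1V1 V1 by simp
    finally show ?thesis .
  qed
  have "B = (H * H) * B * (H * H)" using HH B by simp
  also have "\<dots> = H * M * H" unfolding M_def using H B by (simp add: assoc_mult_mat[of _ ?n ?n _ ?n _ ?n])
  also have "\<dots> = H * (V1 * dmat ?n f * transpose_mat V1) * H" unfolding MV ..
  also have "\<dots> = (H * V1) * dmat ?n f * (transpose_mat V1 * H)"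
  proof -
    define D where "D = dmat ?n f"
    define T where "T = transpose_mat V1"
    have D: "D \<in> carrier_mat ?n ?n" and T: "T \<in> carrier_mat ?n ?n" unfolding D_def T_def using V1 by auto
    have HV1: "H * V1 \<in> carrier_mat ?n ?n" using H V1 by auto
    have HV1D: "H * V1 * D \<in> carrier_mat ?n ?n" using HV1 D by auto
    have V1D: "V1 * D \<in> carrier_mat ?n ?n" using V1 D by auto
    have e1: "(H * V1) * D * (T * H) = ((H * V1) * D * T) * H" by (rule assoc_mult_mat[OF HV1D T H, symmetric])
    have e2: "(H * V1) * D = H * (V1 * D)" by (rule assoc_mult_mat[OF H V1 D])
    have e3: "H * (V1 * D) * T = H * (V1 * D * T)" by (rule assoc_mult_mat[OF H V1D T])
    have "H * (V1 * D * T) * H = (H * (V1 * D) * T) * H" by (simp only: e3)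
    also have "\<dots> = ((H * V1) * D * T) * H" by (simp only: e2)
    also have "\<dots> = (H * V1) * D * (T * H)" by (simp only: e1)
    finally show ?thesis unfolding D_def T_def .
  qed
  also have "\<dots> = V * dmat ?n f * transpose_mat V" by (subst Vt, unfold V_def, rule refl)
  finally show ?case using V VV by blast
qed



lemma diag_dmat: "diag_mat (dmat n f) = map f [0..<n]"
  unfolding diag_mat_def dmat_def by (auto intro: nth_equalityI)

lemma ut_dmat: "upper_triangular (dmat n f)"
  unfolding upper_triangular_def dmat_def by auto

lemma char_poly_dmat: "char_poly (dmat n f) = (\<Prod>a\<leftarrow>map f [0..<n]. [:- a, 1:])"
  using char_poly_upper_triangular[OF dmat_carrier ut_dmat] diag_dmat by metis

lemma order_lin: "order r [:- a, 1:] = (if r = a then 1 else (0::nat))"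
proof (cases "r = a")
  case True thus ?thesis using order_power_n_n[of a 1] by simp
next
  case False
  hence "poly [:- a, 1:] r \<noteq> 0" by simp
  hence "order r [:- a, 1:] = 0" using order_root[of "[:- a, 1:]" r] by auto
  thus ?thesis using False by simp
qed

lemma order_prod_lin: "order (r::real) (\<Prod>a\<leftarrow>xs. [:- a, 1:]) = length (filter ((=) r) xs)"
proof (induction xs)
  case Nil thus ?case by simp
next
  case (Cons x xs)
  have nz: "(\<Prod>a\<leftarrow>xs. [:- a, 1:]) \<noteq> (0 :: real poly)"
    by (auto simp: prod_list_zero_iff)
  have "order r (\<Prod>a\<leftarrow>x # xs. [:- a, 1:]) = order r ([:- x, 1:] * (\<Prod>a\<leftarrow>xs. [:- a, 1:]))" by simp
  also have "\<dots> = order r [:- x, 1:] + order r (\<Prod>a\<leftarrow>xs. [:- a, 1:])"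
    by (rule order_mult, metis nz mult_eq_0_iff pCons_eq_0_iff one_neq_zero)
  also have "\<dots> = (if r = x then 1 else 0) + length (filter ((=) r) xs)" by (simp only: order_lin Cons.IH)
  finally show ?case by simp
qed

lemma poly_prod_lin: "poly (\<Prod>a\<leftarrow>xs. [:- a, 1:]) (r::real) = 0 \<longleftrightarrow> r \<in> set xs"
  by (induction xs, auto)

lemma entry_VDV:
  assumes V: "V \<in> carrier_mat n n" and i: "i < n" and j: "j < n"
  shows "(V * dmat n f * transpose_mat V) $$ (i,j) = (\<Sum>k<n. V $$ (i,k) * f k * V $$ (j,k))"
proof -
  have VD: "\<And>k. k < n \<Longrightarrow> (V * dmat n f) $$ (i,k) = V $$ (i,k) * f k"
  proof -
    fix k assume k: "k < n"
    have "(V * dmat n f) $$ (i,k) = (\<Sum>l<n. V $$ (i,l) * (if l = k then f l else 0))"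
      using V i k unfolding dmat_def by (auto simp: scalar_prod_def atLeast0LessThan intro!: sum.cong)
    also have "\<dots> = V $$ (i,k) * f k" using k by (simp add: if_distrib sum.delta' cong: if_cong)
    finally show "(V * dmat n f) $$ (i,k) = V $$ (i,k) * f k" .
  qed
  have "(V * dmat n f * transpose_mat V) $$ (i,j) = (\<Sum>k<n. (V * dmat n f) $$ (i,k) * V $$ (j,k))"
    using V i j by (auto simp: scalar_prod_def atLeast0LessThan intro!: sum.cong)
  also have "\<dots> = (\<Sum>k<n. V $$ (i,k) * f k * V $$ (j,k))" by (rule sum.cong, auto simp: VD)
  finally show ?thesis .
qed

lemma orth_cols:
  fixes V :: "real mat"
  assumes V: "V \<in> carrier_mat n n" and VV: "transpose_mat V * V = 1\<^sub>m n" and k: "k < n" and l: "l < n"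
  shows "(\<Sum>i<n. V $$ (i,k) * V $$ (i,l)) = (if k = l then 1 else 0)"
proof -
  have "(transpose_mat V * V) $$ (k,l) = (\<Sum>i<n. V $$ (i,k) * V $$ (i,l))"
    using V k l by (auto simp: scalar_prod_def atLeast0LessThan intro!: sum.cong)
  thus ?thesis using VV k l by simp
qed

lemma orth_rows:
  fixes V :: "real mat"
  assumes V: "V \<in> carrier_mat n n" and VV: "transpose_mat V * V = 1\<^sub>m n" and i: "i < n" and j: "j < n"
  shows "(\<Sum>k<n. V $$ (i,k) * V $$ (j,k)) = (if i = j then 1 else 0)"
proof -
  have VV': "V * transpose_mat V = 1\<^sub>m n" by (rule mat_mult_left_right_inverse[of "transpose_mat V" n V], insert V VV, auto)
  have "(V * transpose_mat V) $$ (i,j) = (\<Sum>k<n. V $$ (i,k) * V $$ (j,k))"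
    using V i j by (auto simp: scalar_prod_def atLeast0LessThan intro!: sum.cong)
  thus ?thesis using VV' i j by simp
qed

lemma ones_VDV:
  assumes V: "V \<in> carrier_mat n n"
  shows "(\<Sum>i<n. \<Sum>j<n. (V * dmat n f * transpose_mat V) $$ (i,j)) = (\<Sum>k<n. f k * (\<Sum>i<n. V $$ (i,k))\<^sup>2)"
proof -
  have "(\<Sum>i<n. \<Sum>j<n. (V * dmat n f * transpose_mat V) $$ (i,j)) = (\<Sum>i<n. \<Sum>j<n. \<Sum>k<n. V $$ (i,k) * f k * V $$ (j,k))"
    using entry_VDV[OF V] by simp
  also have "\<dots> = (\<Sum>i<n. \<Sum>k<n. \<Sum>j<n. V $$ (i,k) * f k * V $$ (j,k))"
    by (rule sum.cong, simp, rule sum.swap)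
  also have "\<dots> = (\<Sum>k<n. \<Sum>i<n. \<Sum>j<n. V $$ (i,k) * f k * V $$ (j,k))"
    by (rule sum.swap)
  also have "\<dots> = (\<Sum>k<n. f k * (\<Sum>i<n. V $$ (i,k))\<^sup>2)"
    by (rule sum.cong, simp, simp add: power2_eq_square sum_distrib_left sum_distrib_right mult.commute mult.left_commute)
  finally show ?thesis .
qed

lemma frob_VDV:
  assumes V: "V \<in> carrier_mat n n" and VV: "transpose_mat V * V = 1\<^sub>m n"
  shows "(\<Sum>i<n. \<Sum>j<n. ((V * dmat n f * transpose_mat V) $$ (i,j))\<^sup>2) = (\<Sum>k<n. (f k)\<^sup>2)"
proof -
  define X where "X = V * dmat n f * transpose_mat V"
  have X: "X \<in> carrier_mat n n" unfolding X_def using V by auto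
  have XV: "\<And>i k. i < n \<Longrightarrow> k < n \<Longrightarrow> (\<Sum>j<n. X $$ (i,j) * V $$ (j,k)) = V $$ (i,k) * f k"
  proof -
    fix i k assume i: "i < n" and k: "k < n"
    have "(\<Sum>j<n. X $$ (i,j) * V $$ (j,k)) = (\<Sum>j<n. \<Sum>l<n. V $$ (i,l) * f l * V $$ (j,l) * V $$ (j,k))"
      unfolding X_def using entry_VDV[OF V i] by (simp add: sum_distrib_right)
    also have "\<dots> = (\<Sum>l<n. \<Sum>j<n. V $$ (i,l) * f l * (V $$ (j,l) * V $$ (j,k)))"
      by (subst sum.swap, simp add: mult.assoc)
    also have "\<dots> = (\<Sum>l<n. V $$ (i,l) * f l * (if l = k then 1 else 0))"
      by (rule sum.cong, simp, simp add: sum_distrib_left[symmetric] orth_cols[OF V VV _ k])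
    also have "\<dots> = V $$ (i,k) * f k" using k by (simp add: sum.delta' if_distrib cong: if_cong)
    finally show "(\<Sum>j<n. X $$ (i,j) * V $$ (j,k)) = V $$ (i,k) * f k" .
  qed
  have "(\<Sum>i<n. \<Sum>j<n. (X $$ (i,j))\<^sup>2) = (\<Sum>i<n. \<Sum>j<n. X $$ (i,j) * (\<Sum>k<n. V $$ (i,k) * f k * V $$ (j,k)))"
    unfolding power2_eq_square X_def using entry_VDV[OF V] by simp
  also have "\<dots> = (\<Sum>i<n. \<Sum>k<n. V $$ (i,k) * f k * (\<Sum>j<n. X $$ (i,j) * V $$ (j,k)))"
    by (rule sum.cong, simp, subst sum_distrib_left, subst sum.swap, simp add: sum_distrib_left mult.commute mult.left_commute)
  also have "\<dots> = (\<Sum>i<n. \<Sum>k<n. (f k)\<^sup>2 * (V $$ (i,k))\<^sup>2)"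
    by (rule sum.cong, simp, rule sum.cong, simp, simp add: XV power2_eq_square)
  also have "\<dots> = (\<Sum>k<n. (f k)\<^sup>2 * (\<Sum>i<n. V $$ (i,k) * V $$ (i,k)))"
    by (subst sum.swap, simp add: sum_distrib_left power2_eq_square)
  also have "\<dots> = (\<Sum>k<n. (f k)\<^sup>2)" by (rule sum.cong, simp, simp add: orth_cols[OF V VV])
  finally show ?thesis unfolding X_def .
qed



lemma core:
  fixes \<nu> c :: "nat \<Rightarrow> real" and n k p :: nat
  assumes k: "1 \<le> k" "2 * k < n"
    and csum: "(\<Sum>i<n. (c i)\<^sup>2) = real n"
    and Gpos: "(\<Sum>i<n. (\<nu> i)\<^sup>2) > 0"
    and ineq: "(\<Sum>i<n. \<nu> i * (c i)\<^sup>2) \<ge> sqrt ((real n - real k)\<^sup>2 + (real k)\<^sup>2) * sqrt (\<Sum>i<n. (\<nu> i)\<^sup>2)"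
    and p: "p < n" and pmax: "\<forall>i<n. \<nu> i \<le> \<nu> p"
  shows "\<forall>i<n. i \<noteq> p \<longrightarrow> \<nu> i < \<nu> p" and "(c p)\<^sup>2 \<ge> real n - real k"
proof -
  define G where "G = (\<Sum>i<n. (\<nu> i)\<^sup>2)"
  define s2 where "s2 = (real n - real k)\<^sup>2 + (real k)\<^sup>2"
  define S where "S = (\<Sum>i<n. \<nu> i * (c i)\<^sup>2)"
  define M where "M = \<nu> p"
  define Y where "Y = sqrt s2 * sqrt G"
  have G0: "G > 0" using Gpos unfolding G_def .
  have s2pos: "s2 > 0" unfolding s2_def using k by (simp add: add_pos_nonneg)
  have Y0: "Y > 0" unfolding Y_def using G0 s2pos by simp
  have Y2: "Y\<^sup>2 = s2 * G" unfolding Y_def using G0 s2pos by (simp add: power_mult_distrib)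
  have SY: "S \<ge> Y" using ineq unfolding S_def Y_def s2_def G_def .
  have ns2: "(real n)\<^sup>2 < 2 * s2"
  proof -
    have "0 < (real n - 2 * real k)\<^sup>2" using k by simp
    thus ?thesis unfolding s2_def by (simp add: power2_eq_square algebra_simps)
  qed
  have Mn: "S \<le> M * real n"
  proof -
    have "S \<le> (\<Sum>i<n. M * (c i)\<^sup>2)" unfolding S_def M_def
      by (rule sum_mono, rule mult_right_mono, insert pmax, auto)
    thus ?thesis unfolding sum_distrib_left[symmetric] csum .
  qed
  have small: "M * real n < Y" if "2 * M\<^sup>2 \<le> G" for M
  proof (cases "M \<le> 0")
    case True
    have "M * real n \<le> 0" using True by (simp add: mult_nonpos_nonneg)
    thus ?thesis using Y0 by linarith
  next
    case False
    have "(M * real n)\<^sup>2 = M\<^sup>2 * (real n)\<^sup>2" by (simp add: power_mult_distrib)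
    also have "\<dots> \<le> G / 2 * (real n)\<^sup>2" using that by (intro mult_right_mono, auto)
    also have "\<dots> < G / 2 * (2 * s2)" using ns2 G0 by (intro mult_strict_left_mono, auto)
    also have "\<dots> = Y\<^sup>2" using Y2 by simp
    finally have "(M * real n)\<^sup>2 < Y\<^sup>2" .
    thus ?thesis using Y0 by (rule power2_less_imp_less[OF _ less_imp_le])
  qed
  have Gsplit: "G = M\<^sup>2 + (\<Sum>i\<in>{..<n}-{p}. (\<nu> i)\<^sup>2)" unfolding G_def M_def
    using p by (subst sum.remove[of _ p], auto)
  show "\<forall>i<n. i \<noteq> p \<longrightarrow> \<nu> i < \<nu> p"
  proof (intro allI impI, rule ccontr)
    fix j assume j: "j < n" "j \<noteq> p" "\<not> \<nu> j < \<nu> p"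
    hence eq: "\<nu> j = M" using pmax unfolding M_def by force
    have "(\<nu> j)\<^sup>2 \<le> (\<Sum>i\<in>{..<n}-{p}. (\<nu> i)\<^sup>2)"
      by (rule member_le_sum, insert j, auto)
    hence "2 * M\<^sup>2 \<le> G" using Gsplit eq by simp
    from small[OF this] Mn SY show False by simp
  qed
  define t where "t = (c p)\<^sup>2"
  define Q where "Q = (\<Sum>i\<in>{..<n}-{p}. (\<nu> i)\<^sup>2)"
  define R where "R = sqrt Q"
  have Q0: "Q \<ge> 0" unfolding Q_def by (rule sum_nonneg, auto)
  have R0: "R \<ge> 0" unfolding R_def using Q0 by simp
  have R2: "R\<^sup>2 = Q" unfolding R_def using Q0 by simp
  have GMR: "G = M\<^sup>2 + R\<^sup>2" using Gsplit R2 unfolding Q_def by simp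
  have t0: "t \<ge> 0" unfolding t_def by simp
  have csplit: "real n = t + (\<Sum>i\<in>{..<n}-{p}. (c i)\<^sup>2)" unfolding csum[symmetric] t_def
    using p by (subst sum.remove[of _ p], auto)
  have tn: "t \<le> real n" using csplit by (smt (verit) sum_nonneg zero_le_power2)
  have nuR: "\<nu> i \<le> R" if "i < n" "i \<noteq> p" for i
  proof -
    have "(\<nu> i)\<^sup>2 \<le> Q" unfolding Q_def by (rule member_le_sum, insert that, auto)
    hence "\<bar>\<nu> i\<bar> \<le> R" unfolding R_def by (simp add: real_le_rsqrt)
    thus ?thesis by simp
  qed
  have ST: "S \<le> M * t + R * (real n - t)"
  proof -
    have "S = M * t + (\<Sum>i\<in>{..<n}-{p}. \<nu> i * (c i)\<^sup>2)" unfolding S_def M_def t_def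
      using p by (subst sum.remove[of _ p], auto)
    also have "(\<Sum>i\<in>{..<n}-{p}. \<nu> i * (c i)\<^sup>2) \<le> (\<Sum>i\<in>{..<n}-{p}. R * (c i)\<^sup>2)"
      by (rule sum_mono, rule mult_right_mono, insert nuR, auto)
    also have "\<dots> = R * (real n - t)" using csplit by (simp add: sum_distrib_left[symmetric])
    finally show ?thesis by simp
  qed
  show "(c p)\<^sup>2 \<ge> real n - real k"
  proof (rule ccontr)
    assume "\<not> (c p)\<^sup>2 \<ge> real n - real k"
    hence tlt: "t < real n - real k" unfolding t_def by simp
    show False
    proof (cases "M \<le> R")
      case True
      have "M * real n < Y"
      proof (cases "M \<le> 0")
        case True
    have "M * real n \<le> 0" using True by (simp add: mult_nonpos_nonneg)
    thus ?thesis using Y0 by linarith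
      next
        case False
        hence "M\<^sup>2 \<le> R\<^sup>2" using \<open>M \<le> R\<close> by (intro power_mono, auto)
        hence "2 * M\<^sup>2 \<le> G" using GMR by simp
        from small[OF this] show ?thesis .
      qed
      with Mn SY show False by simp
    next
      case False
      hence MR: "M > R" by simp
      define T where "T = M * t + R * (real n - t)"
      have "T < Y"
      proof (cases "t \<le> real k")
        case True
        define U where "U = real n * (M + R) / 2"
        have "T = (M - R) * t + R * real n" unfolding T_def by (simp add: algebra_simps)
        also have "\<dots> \<le> (M - R) * real k + R * real n" using True MR by (intro add_right_mono mult_left_mono, auto)
        also have "\<dots> \<le> (M - R) * (real n / 2) + R * real n" using k MR by (intro add_right_mono mult_left_mono, auto)
        also have "\<dots> = U" unfolding U_def by (simp add: field_simps)
        finally have TU: "T \<le> U" .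
        have "U\<^sup>2 = (real n)\<^sup>2 * (M + R)\<^sup>2 / 4" unfolding U_def by (simp add: power_mult_distrib power_divide)
        also have "\<dots> \<le> (real n)\<^sup>2 * (2 * G) / 4"
        proof -
          have "(M + R)\<^sup>2 \<le> 2 * G" unfolding GMR using sum_squares_ge_zero[of "M - R" 0]
            by (simp add: power2_eq_square algebra_simps)
          thus ?thesis by (intro divide_right_mono mult_left_mono, auto)
        qed
        also have "\<dots> < (2 * s2) * (2 * G) / 4" using ns2 G0 by (intro divide_strict_right_mono mult_strict_right_mono, auto)
        also have "\<dots> = Y\<^sup>2" using Y2 by simp
        finally have "U\<^sup>2 < Y\<^sup>2" .
        hence "U < Y" using Y0 by (rule power2_less_imp_less[OF _ less_imp_le])
        thus ?thesis using TU by simp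
      next
        case False
        have "T\<^sup>2 \<le> (t\<^sup>2 + (real n - t)\<^sup>2) * (M\<^sup>2 + R\<^sup>2)" unfolding T_def
          using sum_squares_ge_zero[of "M * (real n - t) - R * t" 0]
          by (simp add: power2_eq_square algebra_simps)
        also have "\<dots> < s2 * (M\<^sup>2 + R\<^sup>2)"
        proof -
          have "(t - real k) * (real n - real k - t) > 0" using False tlt by (intro mult_pos_pos, auto)
          hence "t\<^sup>2 + (real n - t)\<^sup>2 < s2" unfolding s2_def by (simp add: power2_eq_square algebra_simps)
          thus ?thesis using GMR G0 by (intro mult_strict_right_mono, auto)
        qed
        also have "\<dots> = Y\<^sup>2" using Y2 GMR by simp
        finally have "T\<^sup>2 < Y\<^sup>2" .
        thus ?thesis using Y0 by (rule power2_less_imp_less[OF _ less_imp_le])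
      qed
      with ST SY show False unfolding T_def by simp
    qed
  qed
qed



lemma cs_card:
  fixes x :: "nat \<Rightarrow> real"
  assumes "finite P"
  shows "(\<Sum>i\<in>P. x i)\<^sup>2 \<le> real (card P) * (\<Sum>i\<in>P. (x i)\<^sup>2)"
proof -
  define S1 where "S1 = (\<Sum>i\<in>P. x i)"
  define S2 where "S2 = (\<Sum>i\<in>P. (x i)\<^sup>2)"
  have inner: "(\<Sum>j\<in>P. (x i)\<^sup>2 + (x j)\<^sup>2 - 2 * (x i * x j)) = real (card P) * (x i)\<^sup>2 + S2 - 2 * x i * S1" for i
    unfolding S1_def S2_def sum_subtractf sum.distrib by (simp add: sum_distrib_left mult.assoc)
  have "0 \<le> (\<Sum>i\<in>P. \<Sum>j\<in>P. (x i - x j)\<^sup>2)" by (intro sum_nonneg, auto)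
  also have "\<dots> = (\<Sum>i\<in>P. \<Sum>j\<in>P. (x i)\<^sup>2 + (x j)\<^sup>2 - 2 * (x i * x j))"
    by (intro sum.cong refl, simp add: power2_eq_square algebra_simps)
  also have "\<dots> = (\<Sum>i\<in>P. real (card P) * (x i)\<^sup>2 + S2 - 2 * x i * S1)" unfolding inner ..
  also have "\<dots> = real (card P) * S2 + real (card P) * S2 - 2 * S1 * S1"
    unfolding sum_subtractf sum.distrib by (simp add: S1_def S2_def sum_distrib_left[symmetric] sum_distrib_right[symmetric] mult.commute)
  finally show ?thesis unfolding S1_def[symmetric] S2_def[symmetric] by (simp add: power2_eq_square mult.commute)
qed

lemma sign_count:
  fixes v :: "nat \<Rightarrow> real" and n k :: nat
  assumes vv: "(\<Sum>i<n. (v i)\<^sup>2) = 1" and s0: "(\<Sum>i<n. v i) \<ge> 0"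
    and s2: "(\<Sum>i<n. v i)\<^sup>2 \<ge> real n - real k" and k: "1 \<le> k" "k < n"
  shows "card {i. i < n \<and> v i \<ge> 0} \<ge> n - k + 1"
proof (rule ccontr)
  define P where "P = {i. i < n \<and> v i \<ge> 0}"
  define N where "N = {..<n} - P"
  assume "\<not> card {i. i < n \<and> v i \<ge> 0} \<ge> n - k + 1"
  hence cP: "card P \<le> n - k" unfolding P_def by simp
  have Psub: "P \<subseteq> {..<n}" unfolding P_def by auto
  have finP: "finite P" using Psub finite_subset by blast
  have "N \<noteq> {}"
  proof
    assume "N = {}"
    hence "P = {..<n}" using Psub unfolding N_def by auto
    hence "card P = n" by simp
    thus False using cP k by simp
  qed
  then obtain j where j: "j \<in> N" by auto
  have Nneg: "\<And>i. i \<in> N \<Longrightarrow> v i < 0" unfolding N_def P_def by auto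
  have finN: "finite N" unfolding N_def by auto
  have sumN: "(\<Sum>i\<in>N. v i) < 0"
  proof -
    have "0 < (\<Sum>i\<in>N. - v i)" by (rule sum_pos, insert finN \<open>N \<noteq> {}\<close> Nneg, auto)
    thus ?thesis by (simp add: sum_negf)
  qed
  have split: "(\<Sum>i<n. v i) = (\<Sum>i\<in>P. v i) + (\<Sum>i\<in>N. v i)"
    unfolding N_def using Psub by (metis finite_lessThan sum.subset_diff add.commute)
  have sP0: "(\<Sum>i\<in>P. v i) \<ge> 0" unfolding P_def by (rule sum_nonneg, auto)
  have lt: "(\<Sum>i<n. v i) < (\<Sum>i\<in>P. v i)" using split sumN by simp
  have "(\<Sum>i<n. v i)\<^sup>2 < (\<Sum>i\<in>P. v i)\<^sup>2" using s0 lt by (intro power_strict_mono, auto)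
  also have "\<dots> \<le> real (card P) * (\<Sum>i\<in>P. (v i)\<^sup>2)" by (rule cs_card[OF finP])
  also have "\<dots> \<le> real (card P) * 1"
  proof -
    have "(\<Sum>i\<in>P. (v i)\<^sup>2) \<le> (\<Sum>i<n. (v i)\<^sup>2)" by (rule sum_mono2, insert Psub, auto)
    thus ?thesis using vv by (intro mult_left_mono, auto)
  qed
  also have "\<dots> \<le> real n - real k" using cP k by simp
  finally show False using s2 by simp
qed



theorem corollary7:
  fixes A :: "real mat" and n k :: nat and \<alpha> :: real
  assumes "A \<in> carrier_mat n n"
    and "transpose_mat A = A"
    and "A + \<alpha> \<cdot>\<^sub>m 1\<^sub>m n \<noteq> 0\<^sub>m n n"
    and "1 \<le> k" and "2 * k < n"
    and "ones_form A \<ge> sqrt ((real n - real k)\<^sup>2 + (real k)\<^sup>2) * frobenius_norm (A + \<alpha> \<cdot>\<^sub>m 1\<^sub>m n) - real n * \<alpha>"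
  shows "\<exists>r. eigenvalue A r \<and> (\<forall>m. eigenvalue A m \<longrightarrow> m \<le> r)
            \<and> order r (char_poly A) = 1
            \<and> (\<exists>v. eigenvector A v r \<and> card {i. i < n \<and> v $ i \<ge> 0} \<ge> n - k + 1)"
proof -
  note A = assms(1) and symA = assms(2) and B0 = assms(3) and k = assms(4,5) and hyp = assms(6)
  from spectral[OF A symA] obtain V \<mu> where V: "V \<in> carrier_mat n n"
    and VV: "transpose_mat V * V = 1\<^sub>m n" and Ad: "A = V * dmat n \<mu> * transpose_mat V" by auto
  define B where "B = A + \<alpha> \<cdot>\<^sub>m 1\<^sub>m n"
  define \<nu> where "\<nu> = (\<lambda>i. \<mu> i + \<alpha>)"
  define c where "c = (\<lambda>k. \<Sum>i<n. V $$ (i,k))"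
  have B: "B \<in> carrier_mat n n" unfolding B_def using A by auto
  have Bd: "B = V * dmat n \<nu> * transpose_mat V"
  proof (rule eq_matI)
    fix i j assume "i < dim_row (V * dmat n \<nu> * transpose_mat V)" "j < dim_col (V * dmat n \<nu> * transpose_mat V)"
    hence i: "i < n" and j: "j < n" using V by auto
    have "B $$ (i,j) = A $$ (i,j) + \<alpha> * (if i = j then 1 else 0)" unfolding B_def using A i j by auto
    also have "\<dots> = (\<Sum>k<n. V $$ (i,k) * \<mu> k * V $$ (j,k)) + \<alpha> * (\<Sum>k<n. V $$ (i,k) * V $$ (j,k))"
    proof -
      have "A $$ (i,j) = (\<Sum>k<n. V $$ (i,k) * \<mu> k * V $$ (j,k))" by (subst Ad, rule entry_VDV[OF V i j])
      thus ?thesis unfolding orth_rows[OF V VV i j] by simp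
    qed
    also have "\<dots> = (\<Sum>k<n. V $$ (i,k) * \<nu> k * V $$ (j,k))"
      unfolding \<nu>_def sum_distrib_left sum.distrib[symmetric] by (intro sum.cong refl) (simp add: algebra_simps)
    also have "\<dots> = (V * dmat n \<nu> * transpose_mat V) $$ (i,j)" using entry_VDV[OF V i j] by simp
    finally show "B $$ (i,j) = (V * dmat n \<nu> * transpose_mat V) $$ (i,j)" .
  qed (insert B V, auto)
  have csum: "(\<Sum>k<n. (c k)\<^sup>2) = real n"
  proof -
    have "(\<Sum>k<n. (c k)\<^sup>2) = (\<Sum>k<n. (\<lambda>_. 1) k * (c k)\<^sup>2)" by simp
    also have "\<dots> = (\<Sum>i<n. \<Sum>j<n. (V * dmat n (\<lambda>_. 1) * transpose_mat V) $$ (i,j))"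
      unfolding c_def by (rule ones_VDV[OF V, symmetric])
    also have "\<dots> = (\<Sum>i<n. \<Sum>j<n. if i = j then 1 else 0)"
      using entry_VDV[OF V] orth_rows[OF V VV] by (intro sum.cong refl, simp)
    also have "\<dots> = real n" by (simp add: sum.delta)
    finally show ?thesis .
  qed
  have onesA: "ones_form A = (\<Sum>k<n. \<mu> k * (c k)\<^sup>2)"
  proof -
    have "ones_form A = (\<Sum>i<n. \<Sum>j<n. A $$ (i,j))" unfolding ones_form_def using A by simp
    also have "\<dots> = (\<Sum>k<n. \<mu> k * (c k)\<^sup>2)" unfolding c_def by (subst Ad, rule ones_VDV[OF V])
    finally show ?thesis .
  qed
  have onesB: "(\<Sum>k<n. \<nu> k * (c k)\<^sup>2) = ones_form A + real n * \<alpha>"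
    unfolding onesA \<nu>_def using csum by (simp add: algebra_simps sum.distrib sum_distrib_left[symmetric])
  have frobB0: "(\<Sum>i<n. \<Sum>j<n. (B $$ (i,j))\<^sup>2) = (\<Sum>k<n. (\<nu> k)\<^sup>2)"
    by (subst Bd, rule frob_VDV[OF V VV])
  have frobB: "frobenius_norm B = sqrt (\<Sum>k<n. (\<nu> k)\<^sup>2)"
    unfolding frobenius_norm_def frobB0[symmetric] using B by simp
  have Gpos: "(\<Sum>k<n. (\<nu> k)\<^sup>2) > 0"
  proof -
    have "\<exists>i j. i < n \<and> j < n \<and> B $$ (i,j) \<noteq> 0"
    proof (rule ccontr)
      assume "\<not> ?thesis"
      hence "B = 0\<^sub>m n n" using B by (intro eq_matI, auto)
      thus False using B0 unfolding B_def by simp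
    qed
    then obtain i0 j0 where ij: "i0 < n" "j0 < n" "B $$ (i0,j0) \<noteq> 0" by auto
    have "(\<Sum>i<n. \<Sum>j<n. (B $$ (i,j))\<^sup>2) > 0"
      by (rule sum_pos2[of _ i0], insert ij, auto intro!: sum_nonneg sum_pos2[of _ j0])
    thus ?thesis unfolding frobB0 .
  qed
  have ineq: "(\<Sum>k<n. \<nu> k * (c k)\<^sup>2) \<ge> sqrt ((real n - real k)\<^sup>2 + (real k)\<^sup>2) * sqrt (\<Sum>k<n. (\<nu> k)\<^sup>2)"
    using hyp onesB frobB unfolding B_def by simp
  have n0: "n > 0" using k by simp
  obtain p where p: "p < n" and pmax: "\<forall>i<n. \<mu> i \<le> \<mu> p"
  proof -
    have "finite (\<mu> ` {..<n})" "\<mu> ` {..<n} \<noteq> {}" using n0 by auto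
    hence "Max (\<mu> ` {..<n}) \<in> \<mu> ` {..<n}" by (rule Max_in)
    then obtain p where "p < n" "\<mu> p = Max (\<mu> ` {..<n})" by auto
    thus ?thesis using that by (metis Max_ge finite_imageI finite_lessThan image_eqI lessThan_iff)
  qed
  have numax: "\<forall>i<n. \<nu> i \<le> \<nu> p" using pmax unfolding \<nu>_def by auto
  note cr = core[OF k csum Gpos ineq p numax]
  have strict: "\<And>i. i < n \<Longrightarrow> i \<noteq> p \<Longrightarrow> \<mu> i < \<mu> p" using cr(1) unfolding \<nu>_def by auto
  have cp: "(c p)\<^sup>2 \<ge> real n - real k" using cr(2) .
  have VV': "V * transpose_mat V = 1\<^sub>m n" by (rule mat_mult_left_right_inverse[of "transpose_mat V" n V], insert V VV, auto)
  have sim: "similar_mat A (dmat n \<mu>)" unfolding similar_mat_def similar_mat_wit_def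
    by (intro exI[of _ V] exI[of _ "transpose_mat V"], insert A V VV VV' Ad, auto simp: Let_def)
  have cpA: "char_poly A = (\<Prod>a\<leftarrow>map \<mu> [0..<n]. [:- a, 1:])"
    using char_poly_similar[OF sim] char_poly_dmat by simp
  have ev_iff: "eigenvalue A m \<longleftrightarrow> m \<in> set (map \<mu> [0..<n])" for m
    unfolding eigenvalue_root_char_poly[OF A] cpA poly_prod_lin ..
  have ord: "order (\<mu> p) (char_poly A) = 1"
  proof -
    have "order (\<mu> p) (char_poly A) = length (filter ((=) (\<mu> p)) (map \<mu> [0..<n]))"
      unfolding cpA by (rule order_prod_lin)
    also have "\<dots> = card {i. i < n \<and> \<mu> p = map \<mu> [0..<n] ! i}" by (simp add: length_filter_conv_card)
    also have "{i. i < n \<and> \<mu> p = map \<mu> [0..<n] ! i} = {i. i < n \<and> \<mu> p = \<mu> i}" by auto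
    also have "{i. i < n \<and> \<mu> p = \<mu> i} = {p}" using p strict by force
    finally show ?thesis by simp
  qed
  define \<sigma> :: real where "\<sigma> = (if c p \<ge> 0 then 1 else -1)"
  define w where "w = vec n (\<lambda>i. \<sigma> * V $$ (i,p))"
  have w: "w \<in> carrier_vec n" unfolding w_def by auto
  have \<sigma>2: "\<sigma> * \<sigma> = 1" unfolding \<sigma>_def by auto
  have ww: "(\<Sum>i<n. (\<sigma> * V $$ (i,p))\<^sup>2) = 1"
    using orth_cols[OF V VV p p] \<sigma>2 by (simp add: power2_eq_square sum_distrib_left[symmetric] algebra_simps)
  have w0: "w \<noteq> 0\<^sub>v n"
  proof
    assume "w = 0\<^sub>v n"
    hence "\<And>i. i < n \<Longrightarrow> \<sigma> * V $$ (i,p) = 0" unfolding w_def by (metis index_vec index_zero_vec(1))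
    hence "(\<Sum>i<n. (\<sigma> * V $$ (i,p))\<^sup>2) = 0" by (intro sum.neutral) auto
    thus False using ww by simp
  qed
  have Aw: "A *\<^sub>v w = \<mu> p \<cdot>\<^sub>v w"
  proof (rule eq_vecI)
    fix i assume "i < dim_vec (\<mu> p \<cdot>\<^sub>v w)"
    hence i: "i < n" using w by auto
    have "(A *\<^sub>v w) $ i = (\<Sum>j<n. A $$ (i,j) * (\<sigma> * V $$ (j,p)))"
      using A i w unfolding w_def by (auto simp: scalar_prod_def atLeast0LessThan intro!: sum.cong)
    also have "\<dots> = (\<Sum>j<n. \<Sum>l<n. V $$ (i,l) * \<mu> l * V $$ (j,l) * (\<sigma> * V $$ (j,p)))"
      using entry_VDV[OF V i] Ad by (simp add: sum_distrib_right)
    also have "\<dots> = (\<Sum>l<n. \<Sum>j<n. \<sigma> * V $$ (i,l) * \<mu> l * (V $$ (j,l) * V $$ (j,p)))"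
      by (subst sum.swap, simp add: algebra_simps)
    also have "\<dots> = (\<Sum>l<n. \<sigma> * V $$ (i,l) * \<mu> l * (if l = p then 1 else 0))"
      by (rule sum.cong, simp, simp add: sum_distrib_left[symmetric] orth_cols[OF V VV _ p])
    also have "\<dots> = \<sigma> * V $$ (i,p) * \<mu> p" using p by (simp add: sum.delta' if_distrib cong: if_cong)
    also have "\<dots> = (\<mu> p \<cdot>\<^sub>v w) $ i" unfolding w_def using i by simp
    finally show "(A *\<^sub>v w) $ i = (\<mu> p \<cdot>\<^sub>v w) $ i" .
  qed (insert A w, auto)
  have eigv: "eigenvector A w (\<mu> p)" unfolding eigenvector_def using A w w0 Aw by auto
  have sumw: "(\<Sum>i<n. \<sigma> * V $$ (i,p)) = \<sigma> * c p" unfolding c_def by (simp add: sum_distrib_left)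
  have "\<sigma> * c p \<ge> 0" unfolding \<sigma>_def by auto
  hence s0: "(\<Sum>i<n. \<sigma> * V $$ (i,p)) \<ge> 0" unfolding sumw .
  have s2: "(\<Sum>i<n. \<sigma> * V $$ (i,p))\<^sup>2 \<ge> real n - real k"
  proof -
    have e: "(\<sigma> * c p)\<^sup>2 = (c p)\<^sup>2" unfolding \<sigma>_def by simp
    show ?thesis unfolding sumw e using cp .
  qed
  have kn: "k < n" using k by simp
  have "card {i. i < n \<and> \<sigma> * V $$ (i,p) \<ge> 0} \<ge> n - k + 1"
    by (rule sign_count[OF ww s0 s2 k(1) kn])
  also have "{i. i < n \<and> \<sigma> * V $$ (i,p) \<ge> 0} = {i. i < n \<and> w $ i \<ge> 0}" unfolding w_def by auto
  finally have cnt: "card {i. i < n \<and> w $ i \<ge> 0} \<ge> n - k + 1" .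
  show ?thesis
  proof (intro exI[of _ "\<mu> p"] conjI allI impI)
    show "eigenvalue A (\<mu> p)" unfolding eigenvalue_def using eigv by auto
    show "order (\<mu> p) (char_poly A) = 1" by (rule ord)
    show "\<exists>v. eigenvector A v (\<mu> p) \<and> n - k + 1 \<le> card {i. i < n \<and> 0 \<le> v $ i}" using eigv cnt by auto
  next
    fix m assume "eigenvalue A m"
    thus "m \<le> \<mu> p" unfolding ev_iff using pmax by auto
  qed
qed


end
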